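(* Let us consider a fragment, $F$, that entered the work state for two consecutive times, $i$ and $i+1$ and remained active. Let $t_{i}$ be the time it entered the work state for the $i$-th time, and let $t_{i+1}$ be the $i+1$ time. Let us define by $k_i$ its known size at time $t_i$, and by size $k_{i+1}$ its size at time $t_{i+1}$+ countdelay. Then, $k_{i+1} \geq X^2 \cdot k_{i}$.
   Context: A broadcast network is modeled as a connected graph G(V,E) with n nodes. In the fragment-level leader election algorithm, nodes are partitioned into fragments each with a candidate; id(F) = (size, candidate identity) ordered lexicographically (by size, then identity); an external edge between F1 and F2 with id(F1) > id(F2) is outgoing for F1 and incoming for F2. Initially each node is a size-1 fragment in state wait. A fragment with an outgoing edge is in wait; a fragment in wait whose external edges are all incoming moves to work, where during a delay countdelay it counts its current size new_size, and compares with its maximal neighbor F': if new_size > X · size(F') (X > 1 a parameter) it remains active, updates its size, makes all external edges outgoing and returns to wait; otherwise it joins F'. A fragment with no external edges is the leader. It has been shown that a fragment that was in work and remained active re-enters work only after each of its neighboring fragments has been in the work state. *)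

theory Defs
  imports Complex_Main
begin

text \<open>Fragment-level model of the leader election algorithm.  A fragment is
  represented by its candidate c (a node with frag c = c); every node v belongs
  to the fragment of candidate frag v.  fsize c is the known size of the
  fragment of candidate c, working c says whether that fragment is in state
  work (otherwise it is in state wait).  The work state lasts from a start
  step to a finish step; the size counted during countdelay is the number
  of nodes of the fragment at the finish step.\<close>

record 'v conf =
  frag :: "'v \<Rightarrow> 'v"
  fsize :: "'v \<Rightarrow> nat"
  working :: "'v \<Rightarrow> bool"

definition broadcast_graph :: "'v set \<Rightarrow> ('v \<Rightarrow> 'v \<Rightarrow> bool) \<Rightarrow> bool" where
  "broadcast_graph V E \<longleftrightarrow> finite V \<and> V \<noteq> {} \<and>
     (\<forall>u v. E u v \<longrightarrow> u \<in> V \<and> v \<in> V \<and> u \<noteq> v \<and> E v u) \<and>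
     (\<forall>u\<in>V. \<forall>v\<in>V. E\<^sup>*\<^sup>* u v)"

definition is_cand :: "'v set \<Rightarrow> 'v conf \<Rightarrow> 'v \<Rightarrow> bool" where
  "is_cand V s c \<longleftrightarrow> c \<in> V \<and> frag s c = c"

definition fnodes :: "'v set \<Rightarrow> 'v conf \<Rightarrow> 'v \<Rightarrow> 'v set" where
  "fnodes V s c = {v \<in> V. frag s v = c}"

definition id_less :: "('v::linorder) conf \<Rightarrow> 'v \<Rightarrow> 'v \<Rightarrow> bool" where
  "id_less s c d \<longleftrightarrow> fsize s c < fsize s d \<or> (fsize s c = fsize s d \<and> c < d)"

definition frag_adj :: "'v set \<Rightarrow> ('v \<Rightarrow> 'v \<Rightarrow> bool) \<Rightarrow> 'v conf \<Rightarrow> 'v \<Rightarrow> 'v \<Rightarrow> bool" where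
  "frag_adj V E s c d \<longleftrightarrow> c \<noteq> d \<and> is_cand V s c \<and> is_cand V s d \<and>
     (\<exists>u v. u \<in> V \<and> v \<in> V \<and> E u v \<and> frag s u = c \<and> frag s v = d)"

definition has_external :: "'v set \<Rightarrow> ('v \<Rightarrow> 'v \<Rightarrow> bool) \<Rightarrow> 'v conf \<Rightarrow> 'v \<Rightarrow> bool" where
  "has_external V E s c \<longleftrightarrow> (\<exists>d. frag_adj V E s c d)"

definition all_incoming :: "'v set \<Rightarrow> ('v \<Rightarrow> 'v \<Rightarrow> bool) \<Rightarrow> ('v::linorder) conf \<Rightarrow> 'v \<Rightarrow> bool" where
  "all_incoming V E s c \<longleftrightarrow> (\<forall>d. frag_adj V E s c d \<longrightarrow> id_less s c d)"

definition max_nbr :: "'v set \<Rightarrow> ('v \<Rightarrow> 'v \<Rightarrow> bool) \<Rightarrow> ('v::linorder) conf \<Rightarrow> 'v \<Rightarrow> 'v" where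
  "max_nbr V E s c = (THE d. frag_adj V E s c d \<and>
      (\<forall>d'. frag_adj V E s c d' \<longrightarrow> d' = d \<or> id_less s d' d))"

definition init_conf :: "'v conf" where
  "init_conf = \<lparr>frag = (\<lambda>v. v), fsize = (\<lambda>_. 1), working = (\<lambda>_. False)\<rparr>"

definition start_work :: "'v set \<Rightarrow> ('v \<Rightarrow> 'v \<Rightarrow> bool) \<Rightarrow> ('v::linorder) conf \<Rightarrow> 'v \<Rightarrow> 'v conf \<Rightarrow> bool" where
  "start_work V E s c s' \<longleftrightarrow> is_cand V s c \<and> \<not> working s c \<and> has_external V E s c \<and>
     all_incoming V E s c \<and> s' = s\<lparr>working := (working s)(c := True)\<rparr>"

definition finish_active :: "'v set \<Rightarrow> ('v \<Rightarrow> 'v \<Rightarrow> bool) \<Rightarrow> real \<Rightarrow> ('v::linorder) conf \<Rightarrow> 'v \<Rightarrow> 'v conf \<Rightarrow> bool" where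
  "finish_active V E X s c s' \<longleftrightarrow> is_cand V s c \<and> working s c \<and> has_external V E s c \<and>
     real (card (fnodes V s c)) > X * real (fsize s (max_nbr V E s c)) \<and>
     s' = s\<lparr>fsize := (fsize s)(c := card (fnodes V s c)), working := (working s)(c := False)\<rparr>"

definition finish_join :: "'v set \<Rightarrow> ('v \<Rightarrow> 'v \<Rightarrow> bool) \<Rightarrow> real \<Rightarrow> ('v::linorder) conf \<Rightarrow> 'v \<Rightarrow> 'v conf \<Rightarrow> bool" where
  "finish_join V E X s c s' \<longleftrightarrow> is_cand V s c \<and> working s c \<and> has_external V E s c \<and>
     \<not> (real (card (fnodes V s c)) > X * real (fsize s (max_nbr V E s c))) \<and>
     s' = s\<lparr>frag := (\<lambda>v. if frag s v = c then max_nbr V E s c else frag s v),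
            working := (working s)(c := False)\<rparr>"

definition alg_step :: "'v set \<Rightarrow> ('v \<Rightarrow> 'v \<Rightarrow> bool) \<Rightarrow> real \<Rightarrow> ('v::linorder) conf \<Rightarrow> 'v conf \<Rightarrow> bool" where
  "alg_step V E X s s' \<longleftrightarrow> (\<exists>c. start_work V E s c s' \<or> finish_active V E X s c s' \<or> finish_join V E X s c s')"

definition execution :: "'v set \<Rightarrow> ('v \<Rightarrow> 'v \<Rightarrow> bool) \<Rightarrow> real \<Rightarrow> (nat \<Rightarrow> ('v::linorder) conf) \<Rightarrow> bool" where
  "execution V E X r \<longleftrightarrow> r 0 = init_conf \<and> (\<forall>t. alg_step V E X (r t) (r (Suc t)) \<or> r (Suc t) = r t)"

definition enters_work :: "(nat \<Rightarrow> 'v conf) \<Rightarrow> 'v \<Rightarrow> nat \<Rightarrow> bool" where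
  "enters_work r c t \<longleftrightarrow> \<not> working (r t) c \<and> working (r (Suc t)) c"

end

theory Submission
  imports Defs
begin


lemma id_less_asym: "id_less s a b \<Longrightarrow> \<not> id_less s b a"
  unfolding id_less_def by auto

lemma frag_adj_sym:
  assumes "frag_adj V E s c d" "\<forall>u v. E u v \<longrightarrow> E v u"
  shows "frag_adj V E s d c"
  using assms unfolding frag_adj_def by blast

lemma max_nbr_props:
  fixes s :: "('v::linorder) conf"
  assumes fin: "finite V" and he: "has_external V E s c"
  shows "frag_adj V E s c (max_nbr V E s c) \<and>
    (\<forall>d'. frag_adj V E s c d' \<longrightarrow> d' = max_nbr V E s c \<or> id_less s d' (max_nbr V E s c))"
proof -
  define A where "A = {d. frag_adj V E s c d}"
  have AV: "A \<subseteq> V" unfolding A_def frag_adj_def is_cand_def by auto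
  have finA: "finite A" using fin AV finite_subset by blast
  have neA: "A \<noteq> {}" using he unfolding A_def has_external_def by auto
  define M where "M = Max (fsize s ` A)"
  define B where "B = {d\<in>A. fsize s d = M}"
  have finB: "finite B" using finA unfolding B_def by auto
  have neB: "B \<noteq> {}" unfolding B_def M_def using finA neA
    by (smt (verit, ccfv_SIG) Max_in empty_Collect_eq finite_imageI image_iff image_is_empty)
  define m where "m = Max B"
  have mB: "m \<in> B" unfolding m_def using finB neB Max_in by blast
  let ?P = "\<lambda>d. frag_adj V E s c d \<and> (\<forall>d'. frag_adj V E s c d' \<longrightarrow> d' = d \<or> id_less s d' d)"
  have Pm: "?P m"
  proof
    show "frag_adj V E s c m" using mB unfolding B_def A_def by auto
    show "\<forall>d'. frag_adj V E s c d' \<longrightarrow> d' = m \<or> id_less s d' m"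
    proof (intro allI impI)
      fix d' assume "frag_adj V E s c d'"
      then have dA: "d' \<in> A" unfolding A_def by auto
      then have le: "fsize s d' \<le> M" unfolding M_def using finA by auto
      have mM: "fsize s m = M" using mB unfolding B_def by auto
      show "d' = m \<or> id_less s d' m"
      proof (cases "fsize s d' = M")
        case True
        then have "d' \<in> B" using dA unfolding B_def by auto
        then have "d' \<le> m" unfolding m_def using finB by auto
        then show ?thesis using True mM unfolding id_less_def by auto
      next
        case False
        then show ?thesis using le mM unfolding id_less_def by auto
      qed
    qed
  qed
  have uniq: "\<And>d. ?P d \<Longrightarrow> d = m"
    using Pm id_less_asym by metis
  have "max_nbr V E s c = m" unfolding max_nbr_def
    using Pm uniq by (rule the_equality)
  then show ?thesis using Pm by simp
qed



definition Inv :: "'v set \<Rightarrow> ('v \<Rightarrow> 'v \<Rightarrow> bool) \<Rightarrow> ('v::linorder) conf \<Rightarrow> bool" where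
  "Inv V E s \<longleftrightarrow> (\<forall>c. working s c \<longrightarrow> is_cand V s c \<and> all_incoming V E s c)"

lemma Inv_init: "Inv V E init_conf"
  unfolding Inv_def init_conf_def by simp

lemma Inv_step:
  fixes s s' :: "('v::linorder) conf"
  assumes bg: "broadcast_graph V E" and X: "X > 1" and inv: "Inv V E s"
    and st: "alg_step V E X s s'"
  shows "Inv V E s'"
proof -
  have fin: "finite V" and sym: "\<forall>u v. E u v \<longrightarrow> E v u"
    using bg unfolding broadcast_graph_def by auto
  from st obtain c0 where
    "start_work V E s c0 s' \<or> finish_active V E X s c0 s' \<or> finish_join V E X s c0 s'"
    unfolding alg_step_def by blast
  moreover
  { assume sw: "start_work V E s c0 s'"
    then have fr: "frag s' = frag s" and fs: "fsize s' = fsize s"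
      and w': "working s' = (working s)(c0 := True)"
      and ic0: "is_cand V s c0" and ai0: "all_incoming V E s c0"
      unfolding start_work_def by auto
    have eqc: "\<And>c. is_cand V s' c = is_cand V s c" unfolding is_cand_def fr by simp
    have eqa: "\<And>c. all_incoming V E s' c = all_incoming V E s c"
      unfolding all_incoming_def frag_adj_def eqc id_less_def fr fs by simp
    have "Inv V E s'" using inv ic0 ai0 unfolding Inv_def eqc eqa w' by auto }
  moreover
  { assume fa: "finish_active V E X s c0 s'"
    let ?m = "max_nbr V E s c0"
    have he: "has_external V E s c0" using fa unfolding finish_active_def by auto
    have mp: "frag_adj V E s c0 ?m \<and> (\<forall>d'. frag_adj V E s c0 d' \<longrightarrow> d' = ?m \<or> id_less s d' ?m)"
      using max_nbr_props[OF fin he] .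
    have big: "real (card (fnodes V s c0)) > X * real (fsize s ?m)"
      and s'd: "s' = s\<lparr>fsize := (fsize s)(c0 := card (fnodes V s c0)), working := (working s)(c0 := False)\<rparr>"
      using fa unfolding finish_active_def by auto
    have "Inv V E s'"
      unfolding Inv_def
    proof (intro allI impI)
      fix c assume wc: "working s' c"
      then have cc0: "c \<noteq> c0" and wsc: "working s c" using s'd by (auto split: if_splits)
      then have ic: "is_cand V s c" and ai: "all_incoming V E s c" using inv unfolding Inv_def by auto
      have fr: "frag s' = frag s" using s'd by simp
      have fadj: "\<And>d. frag_adj V E s' c d = frag_adj V E s c d"
        unfolding frag_adj_def is_cand_def fr by simp
      show "is_cand V s' c \<and> all_incoming V E s' c"
      proof
        show "is_cand V s' c" using ic fr unfolding is_cand_def by simp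
        show "all_incoming V E s' c" unfolding all_incoming_def
        proof (intro allI impI)
          fix d assume "frag_adj V E s' c d"
          then have fd: "frag_adj V E s c d" using fadj by simp
          then have il: "id_less s c d" using ai unfolding all_incoming_def by auto
          show "id_less s' c d"
          proof (cases "d = c0")
            case False
            then show ?thesis using il cc0 s'd unfolding id_less_def by simp
          next
            case True
            have "frag_adj V E s c0 c" using frag_adj_sym[OF fd sym] True by simp
            then have "c = ?m \<or> id_less s c ?m" using mp by simp
            then have "fsize s c \<le> fsize s ?m" unfolding id_less_def by auto
            moreover have "real (fsize s ?m) \<le> X * real (fsize s ?m)" using X
              by (simp add: mult_le_cancel_right1)
            ultimately have "fsize s c < card (fnodes V s c0)" using big by linarith
            then show ?thesis using True cc0 s'd unfolding id_less_def by simp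
          qed
        qed
      qed
    qed }
  moreover
  { assume fj: "finish_join V E X s c0 s'"
    let ?m = "max_nbr V E s c0"
    have he: "has_external V E s c0" and ic0: "is_cand V s c0" and w0: "working s c0"
      using fj unfolding finish_join_def by auto
    have mp: "frag_adj V E s c0 ?m \<and> (\<forall>d'. frag_adj V E s c0 d' \<longrightarrow> d' = ?m \<or> id_less s d' ?m)"
      using max_nbr_props[OF fin he] .
    have ai0: "all_incoming V E s c0" using inv w0 unfolding Inv_def by auto
    have s'd: "s' = s\<lparr>frag := (\<lambda>v. if frag s v = c0 then ?m else frag s v),
            working := (working s)(c0 := False)\<rparr>"
      using fj unfolding finish_join_def by auto
    have mcand: "is_cand V s ?m" using mp unfolding frag_adj_def by auto
    have "Inv V E s'"
      unfolding Inv_def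
    proof (intro allI impI)
      fix c assume wc: "working s' c"
      then have cc0: "c \<noteq> c0" and wsc: "working s c" using s'd by (auto split: if_splits)
      then have ic: "is_cand V s c" and ai: "all_incoming V E s c" using inv unfolding Inv_def by auto
      have mc: "?m \<noteq> c"
      proof
        assume mc: "?m = c"
        then have a1: "frag_adj V E s c0 c" using mp by simp
        then have "id_less s c0 c" using ai0 unfolding all_incoming_def by auto
        moreover have "id_less s c c0" using ai frag_adj_sym[OF a1 sym] unfolding all_incoming_def by blast
        ultimately show False using id_less_asym by blast
      qed
      have fc: "frag s c = c" using ic unfolding is_cand_def by auto
      have fs: "fsize s' = fsize s" using s'd by simp
      show "is_cand V s' c \<and> all_incoming V E s' c"
      proof
        show "is_cand V s' c" using ic fc cc0 s'd unfolding is_cand_def by simp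
        show "all_incoming V E s' c" unfolding all_incoming_def
        proof (intro allI impI)
          fix d assume "frag_adj V E s' c d"
          then obtain u v where dc: "d \<noteq> c" and icd: "is_cand V s' d" and uv: "u \<in> V" "v \<in> V" "E u v"
            and fu: "frag s' u = c" and fv: "frag s' v = d"
            unfolding frag_adj_def by (metis (no_types))
          have fu': "frag s u = c" using fu mc s'd by (auto split: if_splits)
          show "id_less s' c d"
          proof (cases "frag s v = c0")
            case True
            then have dm: "d = ?m" using fv s'd by simp
            have "frag_adj V E s c c0" unfolding frag_adj_def using cc0 ic ic0 uv fu' True by blast
            then have "frag_adj V E s c0 c" using frag_adj_sym[OF _ sym] by blast
            then have "c = ?m \<or> id_less s c ?m" using mp by simp
            then have "id_less s c ?m" using mc by auto
            then show ?thesis using dm fs unfolding id_less_def by simp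
          next
            case False
            then have fv': "frag s v = d" using fv s'd by simp
            then have dc0: "d \<noteq> c0" using False by simp
            have dV: "d \<in> V" and fd': "frag s' d = d" using icd unfolding is_cand_def by auto
            have fd: "frag s d = d"
            proof (cases "frag s d = c0")
              case True
              then have "frag s' d = ?m" using s'd by simp
              then have "d = ?m" using fd' by simp
              then have "frag s d = d" using mcand unfolding is_cand_def by simp
              then show ?thesis .
            qed (use fd' s'd in simp)
            have "frag_adj V E s c d" unfolding frag_adj_def is_cand_def
              using dc ic dV fd uv fu' fv' by (auto simp: is_cand_def)
            then have "id_less s c d" using ai unfolding all_incoming_def by auto
            then show ?thesis using fs unfolding id_less_def by simp
          qed
        qed
      qed
    qed }
  ultimately show ?thesis by blast
qed

lemma Inv_exec:
  assumes bg: "broadcast_graph V E" and X: "X > 1" and ex: "execution V E X r"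
  shows "Inv V E (r t)"
proof (induction t)
  case 0 then show ?case using ex Inv_init unfolding execution_def by simp
next
  case (Suc t)
  have "alg_step V E X (r t) (r (Suc t)) \<or> r (Suc t) = r t" using ex unfolding execution_def by blast
  then show ?case using Suc Inv_step[OF bg X] by auto
qed



lemma fsize_step:
  assumes "alg_step V E X s s'" "\<not> (working s c \<and> \<not> working s' c)"
  shows "fsize s' c = fsize s c"
proof -
  from assms(1) obtain c0 where
    "start_work V E s c0 s' \<or> finish_active V E X s c0 s' \<or> finish_join V E X s c0 s'"
    unfolding alg_step_def by blast
  then show ?thesis
  proof (elim disjE)
    assume "start_work V E s c0 s'" then show ?thesis unfolding start_work_def by auto
  next
    assume fa: "finish_active V E X s c0 s'"
    show ?thesis
    proof (cases "c0 = c")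
      case True then show ?thesis using fa assms(2) unfolding finish_active_def by auto
    next
      case False then show ?thesis using fa unfolding finish_active_def by auto
    qed
  next
    assume "finish_join V E X s c0 s'" then show ?thesis unfolding finish_join_def by auto
  qed
qed

lemma fsize_exec:
  assumes ex: "execution V E X r" and "\<not> (working (r t) c \<and> \<not> working (r (Suc t)) c)"
  shows "fsize (r (Suc t)) c = fsize (r t) c"
proof -
  have "alg_step V E X (r t) (r (Suc t)) \<or> r (Suc t) = r t" using ex unfolding execution_def by blast
  then show ?thesis using fsize_step assms(2) by metis
qed

lemma finish_step:
  fixes s s' :: "('v::linorder) conf"
  assumes bg: "broadcast_graph V E" and X: "X > 1" and inv: "Inv V E s"
    and st: "alg_step V E X s s'" and w: "working s c" and nw: "\<not> working s' c"
    and ic': "is_cand V s' c"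
  shows "real (fsize s' c) > X * real (fsize s c)"
proof -
  have fin: "finite V" using bg unfolding broadcast_graph_def by auto
  have ic: "is_cand V s c" and ai: "all_incoming V E s c" using inv w unfolding Inv_def by auto
  from st obtain c0 where
    "start_work V E s c0 s' \<or> finish_active V E X s c0 s' \<or> finish_join V E X s c0 s'"
    unfolding alg_step_def by blast
  then show ?thesis
  proof (elim disjE)
    assume "start_work V E s c0 s'" then show ?thesis using w nw unfolding start_work_def
      by (auto split: if_splits)
  next
    assume fa: "finish_active V E X s c0 s'"
    have c0: "c0 = c" using fa w nw unfolding finish_active_def by (auto split: if_splits)
    let ?m = "max_nbr V E s c"
    have he: "has_external V E s c" using fa c0 unfolding finish_active_def by auto
    have mp: "frag_adj V E s c ?m" using max_nbr_props[OF fin he] by simp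
    then have "id_less s c ?m" using ai unfolding all_incoming_def by auto
    then have le: "fsize s c \<le> fsize s ?m" unfolding id_less_def by auto
    have big: "real (card (fnodes V s c)) > X * real (fsize s ?m)"
      and fs': "fsize s' c = card (fnodes V s c)"
      using fa c0 unfolding finish_active_def by auto
    have "X * real (fsize s c) \<le> X * real (fsize s ?m)" using le X by simp
    then show ?thesis using big fs' by linarith
  next
    assume fj: "finish_join V E X s c0 s'"
    have c0: "c0 = c" using fj w nw unfolding finish_join_def by (auto split: if_splits)
    let ?m = "max_nbr V E s c"
    have he: "has_external V E s c" using fj c0 unfolding finish_join_def by auto
    have mp: "frag_adj V E s c ?m" using max_nbr_props[OF fin he] by simp
    then have mc: "?m \<noteq> c" unfolding frag_adj_def by auto
    have "frag s c = c" using ic unfolding is_cand_def by auto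
    then have "frag s' c = ?m" using fj c0 unfolding finish_join_def by auto
    then show ?thesis using mc ic' unfolding is_cand_def by auto
  qed
qed



lemma finish_exec:
  assumes bg: "broadcast_graph V E" and X: "X > 1" and ex: "execution V E X r"
    and w: "working (r t) c" and nw: "\<not> working (r (Suc t)) c" and ic: "is_cand V (r (Suc t)) c"
  shows "real (fsize (r (Suc t)) c) > X * real (fsize (r t) c)"
proof -
  have "alg_step V E X (r t) (r (Suc t)) \<or> r (Suc t) = r t" using ex unfolding execution_def by blast
  then have st: "alg_step V E X (r t) (r (Suc t))" using w nw by auto
  show ?thesis using finish_step[OF bg X Inv_exec[OF bg X ex] st w nw ic] .
qed

lemma const_exec:
  assumes ex: "execution V E X r" and ab: "a \<le> b"
    and h: "\<forall>t. a \<le> t \<and> t < b \<longrightarrow> \<not> (working (r t) c \<and> \<not> working (r (Suc t)) c)"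
  shows "fsize (r b) c = fsize (r a) c"
  using ab h
proof (induction b rule: dec_induct)
  case base then show ?case by simp
next
  case (step n)
  then show ?case using fsize_exec[OF ex, of n c] by auto
qed

theorem lemma4:
  fixes V :: "('v::linorder) set" and E :: "'v \<Rightarrow> 'v \<Rightarrow> bool" and X :: real
    and r :: "nat \<Rightarrow> 'v conf" and c :: 'v and t1 t2 t3 t4 :: nat
  assumes "broadcast_graph V E" and "X > 1" and "execution V E X r"
    and "enters_work r c t1" and "enters_work r c t3" and "t1 < t3"
    and "\<forall>t. t1 < t \<and> t < t3 \<longrightarrow> \<not> enters_work r c t"
    and "t1 < t2" and "t2 < t3"
    and "\<forall>t. t1 < t \<and> t \<le> t2 \<longrightarrow> working (r t) c"
    and "\<not> working (r (Suc t2)) c" and "is_cand V (r (Suc t2)) c"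
    and "t3 < t4"
    and "\<forall>t. t3 < t \<and> t \<le> t4 \<longrightarrow> working (r t) c"
    and "\<not> working (r (Suc t4)) c" and "is_cand V (r (Suc t4)) c"
  shows "real (fsize (r (Suc t4)) c) \<ge> X ^ 2 * real (fsize (r t1) c)"
proof -
  note bg = assms(1) and X = assms(2) and ex = assms(3)
  have A: "fsize (r t2) c = fsize (r t1) c"
    using const_exec[OF ex, of t1 t2 c] assms(8,10) by auto
  have w2: "working (r t2) c" using assms(8,10) by auto
  have B: "real (fsize (r (Suc t2)) c) > X * real (fsize (r t2) c)"
    using finish_exec[OF bg X ex w2 assms(11,12)] .
  have C: "\<not> working (r t) c" if "Suc t2 \<le> t" "t \<le> t3" for t
    using that
  proof (induction t rule: dec_induct)
    case base then show ?case using assms(11) by simp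
  next
    case (step n)
    then have "\<not> enters_work r c n" using assms(7,8) by auto
    then show ?case using step unfolding enters_work_def by auto
  qed
  have D: "fsize (r t4) c = fsize (r (Suc t2)) c"
  proof (rule const_exec[OF ex])
    show "Suc t2 \<le> t4" using assms(9,13) by simp
    show "\<forall>t. Suc t2 \<le> t \<and> t < t4 \<longrightarrow> \<not> (working (r t) c \<and> \<not> working (r (Suc t)) c)"
    proof (intro allI impI)
      fix t assume t: "Suc t2 \<le> t \<and> t < t4"
      show "\<not> (working (r t) c \<and> \<not> working (r (Suc t)) c)"
      proof (cases "t \<le> t3")
        case True then show ?thesis using C t by auto
      next
        case False then show ?thesis using assms(14) t by auto
      qed
    qed
  qed
  have w4: "working (r t4) c" using assms(13,14) by auto
  have E: "real (fsize (r (Suc t4)) c) > X * real (fsize (r t4) c)"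
    using finish_exec[OF bg X ex w4 assms(15,16)] .
  have "X * (X * real (fsize (r t1) c)) \<le> X * real (fsize (r t4) c)"
    using B A D X by simp
  then show ?thesis using E by (simp add: power2_eq_square mult.assoc)
qed

end
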